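(* Let $\lambda\in\mathbb Q\cup\{\infty\}$, $i\in\{1,2,3,6\}$ and $\ell\in\mathbb Z_{>0}$. Then: (a) if $d\in R^\lambda_\ell(i)$ then $R^\lambda_\ell(i)=\{\Phi^j(d)\mid j=1,\ldots,i\}$; (b) if $i>1$ and $i\mid\ell$ then $R^\lambda_\ell(i)=\emptyset$; (c) if $i>1$ and $i\nmid\ell$ then $R^\lambda_\ell(i)$ consists of exactly $i$ real roots; (d) $R^\lambda_\ell(1)=\{h_{a,b}\}$, where $a\in\mathbb N$, $b\in\mathbb Z$ satisfy $b/a=\lambda$ and $\gcd(a,b)=\ell$ (for $\lambda=\infty$: $a=0$, $b=\ell$).
   Context: Let $V=\{1_1,1_2,2_1,2_2,3_0,3_1,4_0,4_1,5_{-1},5_0\}$ and identify $\mathbb Z^{10}=\mathbb Z^V$. Let $A$ be the set of 12 arrows $2_2\to1_2$, $1_2\to2_1$, $3_1\to2_1$, $2_2\to3_1$, $4_1\to3_1$, $3_1\to4_0$, $5_0\to4_0$, $4_1\to5_0$, $2_1\to1_1$, $2_1\to3_0$, $4_0\to3_0$, $4_0\to5_{-1}$, and let $P=\{(2_2,2_1),(4_1,4_0),(1_2,1_1),(3_1,3_0),(5_0,5_{-1})\}$. The Ringel form (of the tubular algebra $\Delta$ of type $(6,3,2)$) is $\langle d,e\rangle=\sum_{v\in V}d_ve_v-\sum_{(v\to w)\in A}d_ve_w+\sum_{(v,w)\in P}d_ve_w$. Write $\langle d,e\rangle=d^{t}Ee$ and let $\Phi=-E^{-1}E^{t}$ (Coxeter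 matrix; $\Phi$ is integral with $\Phi^6=\mathrm{id}$). Let $q(d)=\langle d,d\rangle$ and $R=\{d\in\mathbb Z^{10}\setminus\{0\}: q(d)\in\{0,1\}\}$; $d\in R$ is real if $q(d)=1$, imaginary if $q(d)=0$. Let $h_0$ have entries $h_0(1_1,1_2,2_1,2_2,3_0,3_1,4_0,4_1,5_{-1},5_0)=(1,1,3,0,2,2,3,0,1,1)$ and $h_\infty$ entries $(0,1,1,1,0,2,1,1,0,1)$ in the same order; put $h_{a,b}=ah_0+bh_\infty$. $R^+=\{d\in R: \langle d,h_\infty\rangle>0\text{ or }(\langle d,h_\infty\rangle=0\text{ and }\langle h_0,d\rangle>0)\}$. For $d\in R^+$ its slope is $\langle h_0,d\rangle/\langle d,h_\infty\rangle\in\mathbb Q\cup\{\infty\}$ and $R^\lambda$ is the set of positive roots of slope $\lambda$. The rank $\operatorname{rk}(d)$ is the least $m\ge1$ with $\Phi^m(d)=d$; $h(d)=\sum_{j=1}^{\operatorname{rk}(d)}\Phi^j(d)$; the quasi-length $\operatorname{ql}(d)$ is the gcd of the entries of $h(d)$. $R^\lambda_\ell(i)=\{d\in R^\lambda:\operatorname{rk}(d)=i,\ \operatorname{ql}(d)=\ell\}$. *)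

theory Defs
  imports Complex_Main "HOL-Library.Function_Algebras"
begin

text \<open>Vertices of the quiver of the tubular algebra of type (6,3,2).
  Constructor vI_J stands for the vertex I_J; vI_m1 stands for I_{-1}.\<close>
datatype vtx = v1_1 | v1_2 | v2_1 | v2_2 | v3_0 | v3_1 | v4_0 | v4_1 | v5_m1 | v5_0

lemma UNIV_vtx: "(UNIV :: vtx set) = {v1_1, v1_2, v2_1, v2_2, v3_0, v3_1, v4_0, v4_1, v5_m1, v5_0}"
  by (auto intro: vtx.exhaust)

instance vtx :: finite
  by standard (simp add: UNIV_vtx)

type_synonym dimvec = "vtx \<Rightarrow> int"

definition arrows :: "(vtx \<times> vtx) set" where
  "arrows = {(v2_2, v1_2), (v1_2, v2_1), (v3_1, v2_1), (v2_2, v3_1), (v4_1, v3_1), (v3_1, v4_0),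
             (v5_0, v4_0), (v4_1, v5_0), (v2_1, v1_1), (v2_1, v3_0), (v4_0, v3_0), (v4_0, v5_m1)}"

definition relpairs :: "(vtx \<times> vtx) set" where
  "relpairs = {(v2_2, v2_1), (v4_1, v4_0), (v1_2, v1_1), (v3_1, v3_0), (v5_0, v5_m1)}"

definition Emat :: "vtx \<Rightarrow> vtx \<Rightarrow> int" where
  "Emat v w = (if v = w then 1 else 0) - (if (v, w) \<in> arrows then 1 else 0)
              + (if (v, w) \<in> relpairs then 1 else 0)"

definition ringel :: "dimvec \<Rightarrow> dimvec \<Rightarrow> int" where
  "ringel d e = (\<Sum>v\<in>UNIV. \<Sum>w\<in>UNIV. d v * Emat v w * e w)"

text \<open>Coxeter transformation Phi = - E^{-1} E^t, i.e. Phi d is the (integral) vector x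
  with E x = - E^t d.\<close>
definition Phi :: "dimvec \<Rightarrow> dimvec" where
  "Phi d = (THE x. \<forall>v. (\<Sum>w\<in>UNIV. Emat v w * x w) = - (\<Sum>w\<in>UNIV. Emat w v * d w))"

definition qform :: "dimvec \<Rightarrow> int" where
  "qform d = ringel d d"

definition roots :: "dimvec set" where
  "roots = {d. d \<noteq> 0 \<and> qform d \<in> {0, 1}}"

definition h0 :: dimvec where
  "h0 v = (case v of v1_1 \<Rightarrow> 1 | v1_2 \<Rightarrow> 1 | v2_1 \<Rightarrow> 3 | v2_2 \<Rightarrow> 0 | v3_0 \<Rightarrow> 2
                    | v3_1 \<Rightarrow> 2 | v4_0 \<Rightarrow> 3 | v4_1 \<Rightarrow> 0 | v5_m1 \<Rightarrow> 1 | v5_0 \<Rightarrow> 1)"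

definition hinf :: dimvec where
  "hinf v = (case v of v1_1 \<Rightarrow> 0 | v1_2 \<Rightarrow> 1 | v2_1 \<Rightarrow> 1 | v2_2 \<Rightarrow> 1 | v3_0 \<Rightarrow> 0
                    | v3_1 \<Rightarrow> 2 | v4_0 \<Rightarrow> 1 | v4_1 \<Rightarrow> 1 | v5_m1 \<Rightarrow> 0 | v5_0 \<Rightarrow> 1)"

definition hab :: "int \<Rightarrow> int \<Rightarrow> dimvec" where
  "hab a b = (\<lambda>v. a * h0 v + b * hinf v)"

definition pos_roots :: "dimvec set" where
  "pos_roots = {d \<in> roots. ringel d hinf > 0 \<or> (ringel d hinf = 0 \<and> ringel h0 d > 0)}"

text \<open>Slopes in Q \<union> {\<infinity>}: None represents \<infinity>.\<close>
definition slope :: "dimvec \<Rightarrow> rat option" where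
  "slope d = (if ringel d hinf = 0 then None
              else Some (of_int (ringel h0 d) / of_int (ringel d hinf)))"

definition roots_slope :: "rat option \<Rightarrow> dimvec set" where
  "roots_slope lam = {d \<in> pos_roots. slope d = lam}"

definition rk :: "dimvec \<Rightarrow> nat" where
  "rk d = (LEAST m. m \<ge> 1 \<and> (Phi ^^ m) d = d)"

definition hsum :: "dimvec \<Rightarrow> dimvec" where
  "hsum d = (\<Sum>j = 1..rk d. (Phi ^^ j) d)"

definition ql :: "dimvec \<Rightarrow> int" where
  "ql d = Gcd (range (hsum d))"

definition Rset :: "rat option \<Rightarrow> int \<Rightarrow> nat \<Rightarrow> dimvec set" where
  "Rset lam l i = {d \<in> roots_slope lam. rk d = i \<and> ql d = l}"

end

theory Submission
  imports Defs
begin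


lemma sum_vtx: "(\<Sum>v\<in>UNIV. f v) = f v1_1 + f v1_2 + f v2_1 + f v2_2 + f v3_0 + f v3_1 + f v4_0 + f v4_1 + f v5_m1 + (f v5_0 :: int)"
  by (simp add: UNIV_vtx)

lemma ringel_expand: "ringel d e = d v1_1 * e v1_1 + d v1_2 * e v1_1 + d v1_2 * e v1_2 - d v1_2 * e v2_1 - d v2_1 * e v1_1 + d v2_1 * e v2_1 - d v2_1 * e v3_0 - d v2_2 * e v1_2 + d v2_2 * e v2_1 + d v2_2 * e v2_2 - d v2_2 * e v3_1 + d v3_0 * e v3_0 - d v3_1 * e v2_1 + d v3_1 * e v3_0 + d v3_1 * e v3_1 - d v3_1 * e v4_0 - d v4_0 * e v3_0 + d v4_0 * e v4_0 - d v4_0 * e v5_m1 - d v4_1 * e v3_1 + d v4_1 * e v4_0 + d v4_1 * e v4_1 - d v4_1 * e v5_0 + d v5_m1 * e v5_m1 - d v5_0 * e v4_0 + d v5_0 * e v5_m1 + d v5_0 * e v5_0"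
  unfolding ringel_def sum_vtx Emat_def arrows_def relpairs_def by (simp add: algebra_simps)

definition phiF :: "dimvec \<Rightarrow> dimvec" where
  "phiF d = (\<lambda>v. case v of v1_1 \<Rightarrow> - d v1_1 - d v1_2 + d v2_1
     | v1_2 \<Rightarrow> - d v3_0 + d v4_0
     | v2_1 \<Rightarrow> - d v1_1 + d v2_1 - d v2_2 - d v3_0 + d v4_0
     | v2_2 \<Rightarrow> - d v3_0 + d v4_0 - d v5_m1
     | v3_0 \<Rightarrow> d v2_1 - d v3_0 - d v3_1 + d v4_0
     | v3_1 \<Rightarrow> - d v1_1 + d v2_1 - d v3_0 + d v4_0 - d v5_m1
     | v4_0 \<Rightarrow> d v2_1 - d v3_0 + d v4_0 - d v4_1 - d v5_m1
     | v4_1 \<Rightarrow> - d v1_1 + d v2_1 - d v3_0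
     | v5_m1 \<Rightarrow> d v4_0 - d v5_m1 - d v5_0
     | v5_0 \<Rightarrow> d v2_1 - d v3_0)"

lemma Emat_row: "(\<Sum>w\<in>UNIV. Emat v w * x w) = (case v of
   v1_1 \<Rightarrow> x v1_1 | v1_2 \<Rightarrow> x v1_1 + x v1_2 - x v2_1 | v2_1 \<Rightarrow> - x v1_1 + x v2_1 - x v3_0
 | v2_2 \<Rightarrow> - x v1_2 + x v2_1 + x v2_2 - x v3_1 | v3_0 \<Rightarrow> x v3_0
 | v3_1 \<Rightarrow> - x v2_1 + x v3_0 + x v3_1 - x v4_0 | v4_0 \<Rightarrow> - x v3_0 + x v4_0 - x v5_m1
 | v4_1 \<Rightarrow> - x v3_1 + x v4_0 + x v4_1 - x v5_0 | v5_m1 \<Rightarrow> x v5_m1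
 | v5_0 \<Rightarrow> - x v4_0 + x v5_m1 + x v5_0)"
  unfolding sum_vtx Emat_def arrows_def relpairs_def by (cases v) (simp_all add: algebra_simps)

lemma Emat_col: "(\<Sum>w\<in>UNIV. Emat w v * x w) = (case v of
   v1_1 \<Rightarrow> x v1_1 + x v1_2 - x v2_1 | v1_2 \<Rightarrow> x v1_2 - x v2_2 | v2_1 \<Rightarrow> - x v1_2 + x v2_1 + x v2_2 - x v3_1
 | v2_2 \<Rightarrow> x v2_2 | v3_0 \<Rightarrow> - x v2_1 + x v3_0 + x v3_1 - x v4_0
 | v3_1 \<Rightarrow> - x v2_2 + x v3_1 - x v4_1 | v4_0 \<Rightarrow> - x v3_1 + x v4_0 + x v4_1 - x v5_0
 | v4_1 \<Rightarrow> x v4_1 | v5_m1 \<Rightarrow> - x v4_0 + x v5_m1 + x v5_0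
 | v5_0 \<Rightarrow> - x v4_1 + x v5_0)"
  unfolding sum_vtx Emat_def arrows_def relpairs_def by (cases v) (simp_all add: algebra_simps)

lemma Phi_eq: "Phi d = phiF d"
  unfolding Phi_def
proof (rule the_equality)
  show "\<forall>v. (\<Sum>w\<in>UNIV. Emat v w * phiF d w) = - (\<Sum>w\<in>UNIV. Emat w v * d w)"
    unfolding Emat_row Emat_col by (auto simp: phiF_def split: vtx.split)
next
  fix x assume h: "\<forall>v. (\<Sum>w\<in>UNIV. Emat v w * x w) = - (\<Sum>w\<in>UNIV. Emat w v * d w)"
  have e: "\<And>v. (case v of
   v1_1 \<Rightarrow> x v1_1 | v1_2 \<Rightarrow> x v1_1 + x v1_2 - x v2_1 | v2_1 \<Rightarrow> - x v1_1 + x v2_1 - x v3_0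
 | v2_2 \<Rightarrow> - x v1_2 + x v2_1 + x v2_2 - x v3_1 | v3_0 \<Rightarrow> x v3_0
 | v3_1 \<Rightarrow> - x v2_1 + x v3_0 + x v3_1 - x v4_0 | v4_0 \<Rightarrow> - x v3_0 + x v4_0 - x v5_m1
 | v4_1 \<Rightarrow> - x v3_1 + x v4_0 + x v4_1 - x v5_0 | v5_m1 \<Rightarrow> x v5_m1
 | v5_0 \<Rightarrow> - x v4_0 + x v5_m1 + x v5_0) = - (case v of
   v1_1 \<Rightarrow> d v1_1 + d v1_2 - d v2_1 | v1_2 \<Rightarrow> d v1_2 - d v2_2 | v2_1 \<Rightarrow> - d v1_2 + d v2_1 + d v2_2 - d v3_1
 | v2_2 \<Rightarrow> d v2_2 | v3_0 \<Rightarrow> - d v2_1 + d v3_0 + d v3_1 - d v4_0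
 | v3_1 \<Rightarrow> - d v2_2 + d v3_1 - d v4_1 | v4_0 \<Rightarrow> - d v3_1 + d v4_0 + d v4_1 - d v5_0
 | v4_1 \<Rightarrow> d v4_1 | v5_m1 \<Rightarrow> - d v4_0 + d v5_m1 + d v5_0
 | v5_0 \<Rightarrow> - d v4_1 + d v5_0)"
    using h unfolding Emat_row Emat_col by blast
  show "x = phiF d"
  proof
    fix v
    from e[of v1_1] e[of v1_2] e[of v2_1] e[of v2_2] e[of v3_0] e[of v3_1] e[of v4_0] e[of v4_1] e[of v5_m1] e[of v5_0]
    show "x v = phiF d v" by (cases v) (simp_all add: phiF_def)
  qed
qed


definition vl :: "vtx list" where "vl = [v1_1, v1_2, v2_1, v2_2, v3_0, v3_1, v4_0, v4_1, v5_m1, v5_0]"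
definition lst :: "dimvec \<Rightarrow> int list" where "lst d = map d vl"
definition vec :: "int list \<Rightarrow> dimvec" where
  "vec xs = (\<lambda>v. case v of v1_1 \<Rightarrow> xs!0 | v1_2 \<Rightarrow> xs!1 | v2_1 \<Rightarrow> xs!2 | v2_2 \<Rightarrow> xs!3 | v3_0 \<Rightarrow> xs!4
     | v3_1 \<Rightarrow> xs!5 | v4_0 \<Rightarrow> xs!6 | v4_1 \<Rightarrow> xs!7 | v5_m1 \<Rightarrow> xs!8 | v5_0 \<Rightarrow> xs!9)"

definition phiL :: "int list \<Rightarrow> int list" where "phiL xs = lst (phiF (vec xs))"
definition rkL :: "int list \<Rightarrow> nat" where
  "rkL xs = (let p1 = phiL xs; p2 = phiL p1; p3 = phiL p2 in
     if p1 = xs then 1 else if p2 = xs then 2 else if p3 = xs then 3 else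
     if phiL p3 = xs then 4 else if phiL (phiL p3) = xs then 5 else 6)"
definition XL :: "int list \<Rightarrow> int" where "XL xs = xs!2 - xs!3 + xs!6 - xs!7"
definition YL :: "int list \<Rightarrow> int" where "YL xs = - xs!0 + xs!1 - 2*xs!4 + 2*xs!5 - xs!8 + xs!9"
definition qL :: "int list \<Rightarrow> int" where "qL xs = ringel (vec xs) (vec xs)"
definition keyL :: "int list \<Rightarrow> nat \<times> int \<times> int" where
  "keyL xs = (rkL xs, XL xs mod 6, YL xs mod 6)"

fun signs :: "nat \<Rightarrow> int list list" where
  "signs 0 = [[]]"
| "signs (Suc n) = map ((#) 1) (signs n) @ map ((#) (-1)) (signs n)"
fun nz1 :: "nat \<Rightarrow> int list list" where
  "nz1 0 = []"
| "nz1 (Suc n) = [1 # replicate n 0, (-1) # replicate n 0] @ map ((#) 0) (nz1 n)"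
fun nz2 :: "nat \<Rightarrow> int list list" where
  "nz2 0 = []"
| "nz2 (Suc n) = map ((#) 1) (nz1 n) @ map ((#) (-1)) (nz1 n) @ map ((#) 0) (nz2 n)"

definition cands :: "int list list" where "cands = map (map ((*) 2)) (nz2 8) @ signs 8"
definition miL :: "int list \<Rightarrow> int list" where
  "miL w = [2 * w!6 + 2 * w!7,
    2 * w!5 + 2 * w!6 + 4 * w!7,
    - w!0 + w!1 - w!2 - w!3 + w!4 + w!5 + w!6 + 3 * w!7,
    w!0 - w!1 + w!2 + w!3 + w!4 + w!5 + w!6 + 3 * w!7,
    2 * w!1 + 2 * w!4 + 2 * w!5 + 2 * w!6 + 4 * w!7,
    w!0 - w!1 + w!2 + w!3 - w!4 - w!5 - w!6 + w!7,
    - w!0 + w!1 - w!2 + w!3 + w!4 + w!5 + w!6 + w!7,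
    2 * w!2 + 2 * w!7]"
definition decode :: "int list \<Rightarrow> int list" where
  "decode w = (let m = map (\<lambda>z. z div 4) (miL w) in [0, m!0, m!1, 0, m!2, m!3, m!4, m!5, m!6, m!7])"
definition realizable :: "int list \<Rightarrow> bool" where
  "realizable w = list_all (\<lambda>z. z mod 4 = 0) (miL w)"
definition RL :: "int list list" where "RL = map decode (filter realizable cands)"
definition KL :: "(nat \<times> int \<times> int) list" where "KL = [(6,1,0), (6,4,5), (6,5,0), (6,0,5), (6,5,4), (6,0,1), (6,1,2), (6,4,3), (3,2,2), (2,3,3), (6,2,3), (6,3,2), (6,3,4), (6,2,1), (6,2,1), (6,5,0), (6,0,1), (6,1,0), (6,0,5), (6,1,2), (6,2,3), (6,5,4), (2,3,3), (3,4,4), (6,3,4), (6,4,3), (6,4,5), (6,3,2), (6,1,1), (6,2,0), (6,1,5), (6,2,2), (6,3,3), (3,0,4), (6,4,3), (6,5,4), (6,4,4), (6,5,3), (6,5,5), (6,4,2), (6,4,0), (6,5,5), (6,4,4), (6,5,1), (3,0,2), (6,3,3), (6,1,2), (6,2,3), (6,1,3), (6,2,2), (6,2,4), (6,1,1), (6,5,5), (6,0,2), (6,1,3), (6,4,4), (6,2,3), (6,3,4), (3,2,4), (6,3,3), (6,3,5), (6,2,2), (6,0,4), (6,1,1), (6,2,2), (6,5,3), (6,3,2), (6,4,3), (6,3,3), (3,4,2), (6,4,4), (6,3,1), (6,1,1), (6,4,2), (6,2,1), (6,3,2), (6,2,2), (6,3,1), (6,3,3), (3,2,0), (6,2,4),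 (6,5,5), (6,3,4), (6,4,5), (6,3,5), (6,4,4), (3,4,0), (6,3,3), (6,4,5), (6,5,0), (6,4,0), (6,5,5), (6,5,1), (6,4,4), (6,1,0), (6,2,1), (6,1,1), (6,2,0), (6,2,2), (6,1,5), (6,5,0), (6,0,5), (6,0,1), (6,5,4), (6,0,1), (6,1,0), (6,1,2), (6,0,5), (6,0,2), (6,5,5), (6,1,1), (6,0,4), (6,5,3), (6,5,1), (6,5,2), (2,0,3), (3,0,2), (6,1,3), (6,1,4), (6,1,2), (6,2,0), (6,3,1), (6,3,2), (6,3,0), (3,4,2), (6,4,0), (6,4,1), (6,5,2), (6,2,4), (6,3,5), (6,3,0), (6,3,4), (6,4,0), (3,4,4), (6,4,5), (6,5,0), (6,0,4), (6,0,2), (6,0,3), (6,1,4), (6,1,3), (3,2,4), (6,2,5), (6,2,3), (3,0,4), (6,1,5), (6,1,0), (6,1,4), (6,2,0), (6,2,4), (6,2,5), (6,3,0), (3,4,4), (6,4,2), (6,4,3), (6,5,4), (6,5,3), (6,0,4), (6,0,5), (6,0,3), (6,4,2), (3,4,0), (6,4,1), (6,5,2), (6,5,1), (6,0,2), (6,0,3), (6,0,1), (6,1,5), (3,2,0), (6,2,1), (6,2,5), (6,3,1), (6,3,5), (2,3,0), (6,4,1), (6,2,5), (2,3,0), (6,3,1), (6,3,5), (6,4,1), (6,4,5), (3,4,0), (6,5,1), (6,0,5), (6,0,3), (6,0,4), (6,1,5), (6,1,4), (6,2,5), (3,2,0), (6,2,4), (6,0,3), (6,0,1), (6,0,2), (6,1,3),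 (6,1,2), (6,2,3), (6,2,4), (3,2,2), (6,3,0), (6,4,1), (6,4,2), (6,4,0), (6,5,2), (6,5,0), (6,5,1), (3,0,2), (6,4,3), (6,4,1), (3,4,2), (6,5,3), (6,5,2), (6,0,3), (6,0,4), (6,0,2), (6,1,0), (6,2,1), (3,2,2), (6,2,0), (6,3,2), (6,3,0), (6,3,1), (6,4,2), (6,1,4), (6,2,5), (6,2,0), (3,2,4), (6,3,0), (6,3,4), (6,3,5), (6,4,0), (6,5,4), (6,5,2), (6,5,3), (3,0,4), (2,0,3), (6,1,4), (6,1,5), (6,1,3)]"


lemma RL_distinct: "distinct RL" by code_simp
lemma RL_props: "list_all (\<lambda>xs. length xs = 10 \<and> xs!0 = 0 \<and> xs!3 = 0 \<and> qL xs = 1) RL" 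
  unfolding qL_def ringel_expand by code_simp
lemma RL_keys: "map keyL RL = KL" by code_simp


lemma sq_le1: "(x::int) * x \<le> 2 \<Longrightarrow> x = -1 \<or> x = 0 \<or> x = 1"
proof -
  assume h: "x * x \<le> 2"
  have "\<bar>x\<bar> \<le> 1"
  proof (rule ccontr)
    assume "\<not> \<bar>x\<bar> \<le> 1" then have "\<bar>x\<bar> \<ge> 2" by simp
    then have "\<bar>x\<bar> * \<bar>x\<bar> \<ge> 2 * 2" by (metis mult_mono' abs_ge_zero zero_le_numeral)
    then show False using h by (simp add: abs_mult_self_eq)
  qed
  then show ?thesis by auto
qed

lemma sumsq_nonneg: "0 \<le> sum_list (map (\<lambda>x. x * x) (xs :: int list))"
  by (induction xs) auto

lemma sumsq0: "sum_list (map (\<lambda>x. x * x) (xs :: int list)) = 0 \<Longrightarrow> xs = replicate (length xs) 0"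
proof (induction xs)
  case Nil then show ?case by simp
next
  case (Cons x xs)
  have a: "0 \<le> x * x" by simp
  have b: "0 \<le> sum_list (map (\<lambda>x. x * x) xs)" by (rule sumsq_nonneg)
  have c: "x * x + sum_list (map (\<lambda>x. x * x) xs) = 0" using Cons.prems by simp
  from c a b have "x * x = 0" "sum_list (map (\<lambda>x. x * x) xs) = 0" by linarith+
  then show ?case using Cons.IH by simp
qed

lemma sumsq1: "sum_list (map (\<lambda>x. x * x) (xs :: int list)) = 1 \<Longrightarrow> xs \<in> set (nz1 (length xs))"
proof (induction xs)
  case Nil then show ?case by simp
next
  case (Cons x xs)
  have b: "0 \<le> sum_list (map (\<lambda>x. x * x) xs)" by (rule sumsq_nonneg)
  from Cons.prems b have "x * x \<le> 2" by simp
  then have "x = -1 \<or> x = 0 \<or> x = 1" by (rule sq_le1)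
  then show ?case
  proof (elim disjE)
    assume "x = -1" then have "sum_list (map (\<lambda>x. x * x) xs) = 0" using Cons.prems by simp
    then show ?case using \<open>x = -1\<close> sumsq0 by fastforce
  next
    assume "x = 1" then have "sum_list (map (\<lambda>x. x * x) xs) = 0" using Cons.prems by simp
    then show ?case using \<open>x = 1\<close> sumsq0 by fastforce
  next
    assume "x = 0" then show ?case using Cons by simp
  qed
qed

lemma sumsq2: "sum_list (map (\<lambda>x. x * x) (xs :: int list)) = 2 \<Longrightarrow> xs \<in> set (nz2 (length xs))"
proof (induction xs)
  case Nil then show ?case by simp
next
  case (Cons x xs)
  have b: "0 \<le> sum_list (map (\<lambda>x. x * x) xs)" by (rule sumsq_nonneg)
  from Cons.prems b have "x * x \<le> 2" by simp
  then have "x = -1 \<or> x = 0 \<or> x = 1" by (rule sq_le1)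
  then show ?case
  proof (elim disjE)
    assume "x = -1" then have "sum_list (map (\<lambda>x. x * x) xs) = 1" using Cons.prems by simp
    then show ?case using \<open>x = -1\<close> sumsq1 by fastforce
  next
    assume "x = 1" then have "sum_list (map (\<lambda>x. x * x) xs) = 1" using Cons.prems by simp
    then show ?case using \<open>x = 1\<close> sumsq1 by fastforce
  next
    assume "x = 0" then show ?case using Cons by simp
  qed
qed

lemma sumsq_ge_len: "(\<forall>x\<in>set xs. odd (x::int)) \<Longrightarrow> int (length xs) \<le> sum_list (map (\<lambda>x. x * x) xs)"
proof (induction xs)
  case Nil then show ?case by simp
next
  case (Cons x xs)
  have "x \<noteq> 0" using Cons.prems by auto
  then have "1 \<le> x * x" by (metis int_one_le_iff_zero_less zero_less_mult_iff not_less_iff_gr_or_eq)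
  then show ?case using Cons by simp
qed

lemma sumsq_odd: "(\<forall>x\<in>set xs. odd (x::int)) \<Longrightarrow> sum_list (map (\<lambda>x. x * x) xs) = int (length xs) \<Longrightarrow> xs \<in> set (signs (length xs))"
proof (induction xs)
  case Nil then show ?case by simp
next
  case (Cons x xs)
  have "x \<noteq> 0" using Cons.prems by auto
  then have x1: "1 \<le> x * x" by (metis int_one_le_iff_zero_less zero_less_mult_iff not_less_iff_gr_or_eq)
  have "int (length xs) \<le> sum_list (map (\<lambda>x. x * x) xs)" using Cons.prems by (intro sumsq_ge_len) auto
  with x1 Cons.prems have "x * x = 1" "sum_list (map (\<lambda>x. x * x) xs) = int (length xs)" by auto
  then have "x = 1 \<or> x = -1" using sq_le1[of x] by auto
  moreover have "xs \<in> set (signs (length xs))" using Cons \<open>sum_list (map (\<lambda>x. x * x) xs) = int (length xs)\<close> by simp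
  ultimately show ?case by auto
qed

definition wv :: "dimvec \<Rightarrow> int list" where
 "wv d = [- d v3_0 + 2 * d v4_0 + d v4_1 - 2 * d v5_m1 - 2 * d v5_0,
 - d v3_0 - 2 * d v3_1 + 2 * d v4_0 + d v4_1,
 - d v3_0 - d v4_1 + 2 * d v5_0,
 - d v3_0 + d v4_1 + 2 * d v5_m1,
 - 2 * d v2_1 + d v3_0 + 2 * d v3_1 - d v4_1,
 - 2 * d v1_2 + 2 * d v2_1 - d v3_0 - d v4_1,
 2 * d v1_2 - d v3_0 - d v4_1,
 d v3_0 + d v4_1]"

lemma wv_sq: "d v1_1 = 0 \<Longrightarrow> d v2_2 = 0 \<Longrightarrow> sum_list (map (\<lambda>x. x * x) (wv d)) = 8 * qform d"
  unfolding wv_def qform_def ringel_expand by (simp add: algebra_simps power2_eq_square)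

lemma wv_par: "\<forall>x\<in>set (wv d). (even x \<longleftrightarrow> even (d v3_0 + d v4_1))"
  unfolding wv_def by auto

lemma wv_decode: "d v1_1 = 0 \<Longrightarrow> d v2_2 = 0 \<Longrightarrow> decode (wv d) = lst d \<and> realizable (wv d)"
proof -
  assume a: "d v1_1 = 0" "d v2_2 = 0"
  have m: "miL (wv d) = [4 * d v1_2, 4 * d v2_1, 4 * d v3_0, 4 * d v3_1, 4 * d v4_0, 4 * d v4_1, 4 * d v5_m1, 4 * d v5_0]"
    unfolding miL_def wv_def by (simp add: algebra_simps)
  show ?thesis unfolding decode_def realizable_def m lst_def vl_def using a by simp
qed

lemma wv_len: "length (wv d) = 8" by (simp add: wv_def)

lemma T_enum: assumes "d v1_1 = 0" "d v2_2 = 0" "qform d = 1" shows "lst d \<in> set RL"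
proof -
  have s: "sum_list (map (\<lambda>x. x * x) (wv d)) = 8" using wv_sq[OF assms(1,2)] assms(3) by simp
  have "wv d \<in> set cands"
  proof (cases "even (d v3_0 + d v4_1)")
    case True
    then have ev: "\<forall>x\<in>set (wv d). even x" using wv_par by blast
    define z where "z = map (\<lambda>x. x div 2) (wv d)"
    have wz: "wv d = map ((*) 2) z" unfolding z_def using ev by (simp add: map_idI) 
    have "sum_list (map (\<lambda>x. x * x) (map ((*) 2) z)) = 4 * sum_list (map (\<lambda>x. x * x) z)"
      by (induction z) (auto simp: algebra_simps)
    then have "sum_list (map (\<lambda>x. x * x) z) = 2" using s wz by simp
    then have "z \<in> set (nz2 8)" using sumsq2[of z] wz wv_len[of d] by simp
    then show ?thesis unfolding cands_def using wz by auto
  next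
    case False
    then have od: "\<forall>x\<in>set (wv d). odd x" using wv_par by blast
    then have "wv d \<in> set (signs 8)" using sumsq_odd[OF od] s wv_len[of d] by simp
    then show ?thesis unfolding cands_def by auto
  qed
  moreover have "decode (wv d) = lst d" "realizable (wv d)" using wv_decode[OF assms(1,2)] by auto
  ultimately show ?thesis unfolding RL_def set_map set_filter by (intro image_eqI[of _ _ "wv d"]) auto
qed

lemma T_zero: assumes "d v1_1 = 0" "d v2_2 = 0" "qform d = 0" shows "d = 0"
proof -
  have s: "sum_list (map (\<lambda>x. x * x) (wv d)) = 0" using wv_sq[OF assms(1,2)] assms(3) by simp
  then have "wv d = replicate 8 0" using sumsq0 wv_len by metis
  then have "lst d = decode (replicate 8 0)" using wv_decode[OF assms(1,2)] by simp
  also have "\<dots> = replicate 10 0" by (simp add: decode_def miL_def numeral_eq_Suc)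
  finally have "lst d = replicate 10 0" .
  then show "d = 0" unfolding lst_def vl_def apply (intro ext) subgoal for v by (cases v) (simp_all add: numeral_eq_Suc) done
qed


definition shift :: "dimvec \<Rightarrow> int \<Rightarrow> int \<Rightarrow> dimvec" where
  "shift d a b = (\<lambda>v. d v + a * h0 v + b * hinf v)"

lemma X_exp: "ringel d hinf = d v2_1 - d v2_2 + d v4_0 - d v4_1"
  unfolding ringel_expand hinf_def by simp
lemma Y_exp: "ringel h0 d = - d v1_1 + d v1_2 - 2 * d v3_0 + 2 * d v3_1 - d v5_m1 + d v5_0"
  unfolding ringel_expand h0_def by simp

lemma X_shift: "ringel (shift d a b) hinf = ringel d hinf + 6 * a"
  unfolding X_exp shift_def h0_def hinf_def by simp
lemma Y_shift: "ringel h0 (shift d a b) = ringel h0 d + 6 * b"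
  unfolding Y_exp shift_def h0_def hinf_def by simp
lemma q_shift: "qform (shift d a b) = qform d"
  unfolding qform_def ringel_expand shift_def h0_def hinf_def by (simp add: algebra_simps)

lemma Phi_shift: "Phi (shift d a b) = shift (Phi d) a b"
  unfolding Phi_eq by (rule ext) (simp add: phiF_def shift_def h0_def hinf_def algebra_simps split: vtx.split)

lemma X_Phi: "ringel (Phi d) hinf = ringel d hinf"
  unfolding X_exp Phi_eq phiF_def by simp
lemma Y_Phi: "ringel h0 (Phi d) = ringel h0 d"
  unfolding Y_exp Phi_eq phiF_def by simp
lemma q_Phi: "qform (Phi d) = qform d"
  unfolding qform_def ringel_expand Phi_eq phiF_def by (simp add: algebra_simps)

lemma Phi_add: "Phi (d + e) = Phi d + Phi e"
  unfolding Phi_eq by (rule ext) (simp add: phiF_def algebra_simps split: vtx.split)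
lemma Phi_zero: "Phi 0 = 0"
  unfolding Phi_eq by (rule ext) (simp add: phiF_def split: vtx.split)

lemma Phi3: "Phi (Phi (Phi d)) = (\<lambda>v. case v of v1_1 \<Rightarrow> d v5_m1
     | v1_2 \<Rightarrow> d v5_0 | v2_1 \<Rightarrow> d v4_0 | v2_2 \<Rightarrow> d v4_1 | v3_0 \<Rightarrow> d v3_0
     | v3_1 \<Rightarrow> d v3_1 | v4_0 \<Rightarrow> d v2_1 | v4_1 \<Rightarrow> d v2_2 | v5_m1 \<Rightarrow> d v1_1 | v5_0 \<Rightarrow> d v1_2)"
  unfolding Phi_eq by (rule ext) (simp add: phiF_def split: vtx.split)

lemma Phi6: "(Phi ^^ 6) d = d"
proof -
  have "(Phi ^^ 6) d = Phi (Phi (Phi (Phi (Phi (Phi d)))))" by (simp add: numeral_eq_Suc)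
  also have "\<dots> = d" unfolding Phi3 by (rule ext) (simp split: vtx.split)
  finally show ?thesis .
qed

lemma fix_rad: "Phi e = e \<Longrightarrow> e = shift 0 (e v1_1) (e v2_2)"
proof -
  assume h: "Phi e = e"
  have "\<And>v. phiF e v = e v" using h unfolding Phi_eq by simp
  from this[of v1_1] this[of v1_2] this[of v2_1] this[of v2_2] this[of v3_0] this[of v3_1]
       this[of v4_0] this[of v4_1] this[of v5_m1] this[of v5_0]
  show ?thesis unfolding phiF_def shift_def h0_def hinf_def
    by (intro ext) (simp split: vtx.split)
qed

lemma shift_hab: "shift 0 a b = hab a b" unfolding shift_def hab_def by simp

lemma shift_inj: "shift d a b = shift e a b \<Longrightarrow> d = e"
  unfolding shift_def by (auto simp: fun_eq_iff)

lemma shift_red: "shift (shift d (- d v1_1) (- d v2_2)) (d v1_1) (d v2_2) = d"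
  unfolding shift_def by (rule ext) (simp add: algebra_simps)

lemma red_zero: "shift d (- d v1_1) (- d v2_2) v1_1 = 0" "shift d (- d v1_1) (- d v2_2) v2_2 = 0"
  unfolding shift_def h0_def hinf_def by simp_all

lemma shift_shift: "shift (shift d a b) a' b' = shift d (a + a') (b + b')"
  unfolding shift_def by (rule ext) (simp add: algebra_simps)

lemma funpow_shift: "(Phi ^^ m) (shift d a b) = shift ((Phi ^^ m) d) a b"
  by (induction m) (simp_all add: Phi_shift)

lemma X_Phi_pow: "ringel ((Phi ^^ m) d) hinf = ringel d hinf"
  by (induction m) (simp_all add: X_Phi)
lemma Y_Phi_pow: "ringel h0 ((Phi ^^ m) d) = ringel h0 d"
  by (induction m) (simp_all add: Y_Phi)
lemma q_Phi_pow: "qform ((Phi ^^ m) d) = qform d"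
  by (induction m) (simp_all add: q_Phi)

lemma Phi_pow_add: "(Phi ^^ m) (d + e) = (Phi ^^ m) d + (Phi ^^ m) e"
  by (induction m) (simp_all only: funpow.simps comp_apply Phi_add id_apply)

lemma rk_ex: "\<exists>m. m \<ge> 1 \<and> (Phi ^^ m) d = d"
  using Phi6 by (intro exI[of _ 6]) simp

lemma rk_props: "rk d \<ge> 1" "(Phi ^^ rk d) d = d" "rk d \<le> 6"
proof -
  have "rk d \<ge> 1 \<and> (Phi ^^ rk d) d = d" unfolding rk_def by (rule LeastI_ex) (rule rk_ex)
  then show "rk d \<ge> 1" "(Phi ^^ rk d) d = d" by auto
  show "rk d \<le> 6" unfolding rk_def by (rule Least_le) (simp add: Phi6)
qed

lemma rk_min: "1 \<le> m \<Longrightarrow> (Phi ^^ m) d = d \<Longrightarrow> rk d \<le> m"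
  unfolding rk_def by (rule Least_le) simp

lemma rk_cong: "(\<And>m. (Phi ^^ m) d = d \<longleftrightarrow> (Phi ^^ m) e = e) \<Longrightarrow> rk d = rk e"
  unfolding rk_def by simp

lemma rk_shift: "rk (shift d a b) = rk d"
  by (rule rk_cong) (metis funpow_shift shift_inj)

lemma Phi_pow_inj: "(Phi ^^ j) d = (Phi ^^ j) e \<Longrightarrow> d = e"
proof -
  assume h: "(Phi ^^ j) d = (Phi ^^ j) e"
  have k: "\<And>x. (Phi ^^ (6 * j)) x = x"
  proof -
    fix x show "(Phi ^^ (6 * j)) x = x"
      by (induction j) (simp_all add: funpow_add Phi6[unfolded fun_eq_iff[symmetric]] mult.commute[of 6] funpow_mult)
  qed
  have c: "(Phi ^^ (5 * j)) ((Phi ^^ j) x) = x" for x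
  proof -
    have "(Phi ^^ (5 * j)) ((Phi ^^ j) x) = (Phi ^^ (5 * j + j)) x" by (simp only: funpow_add comp_apply)
    also have "5 * j + j = 6 * j" by simp
    finally show ?thesis using k by simp
  qed
  have "(Phi ^^ (5 * j)) ((Phi ^^ j) d) = (Phi ^^ (5 * j)) ((Phi ^^ j) e)" using h by simp
  then show "d = e" using c by simp
qed

lemma rk_Phi_pow: "rk ((Phi ^^ j) d) = rk d"
proof (rule rk_cong)
  fix m
  have "(Phi ^^ m) ((Phi ^^ j) d) = (Phi ^^ j) ((Phi ^^ m) d)"
    by (metis comp_apply funpow_add add.commute)
  then show "(Phi ^^ m) ((Phi ^^ j) d) = (Phi ^^ j) d \<longleftrightarrow> (Phi ^^ m) d = d"
    using Phi_pow_inj by metis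
qed


lemma sum_fun_apply: "(sum f A) (v::vtx) = (\<Sum>j\<in>A. (f j v :: int))"
  by (induction A rule: infinite_finite_induct) auto

lemma Phi_sum: "Phi (sum f A) = (\<Sum>j\<in>A. Phi (f j))"
proof (induction A rule: infinite_finite_induct)
  case (infinite A) then show ?case using Phi_zero by (simp add: zero_fun_def)
next
  case empty then show ?case using Phi_zero by (simp add: zero_fun_def)
next
  case (insert x F)
  have "Phi (sum f (insert x F)) = Phi (f x + sum f F)" using insert.hyps by simp
  also have "\<dots> = Phi (f x) + Phi (sum f F)" by (rule Phi_add)
  also have "\<dots> = Phi (f x) + (\<Sum>j\<in>F. Phi (f j))" using insert.IH by (simp only:)
  also have "\<dots> = (\<Sum>j\<in>insert x F. Phi (f j))" by (rule sum.insert[symmetric]) (use insert.hyps in auto)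
  finally show ?case .
qed

lemma X_sum: "ringel (sum f A) hinf = (\<Sum>j\<in>A. ringel (f j) hinf)"
  unfolding X_exp sum_fun_apply by (simp add: sum_subtractf sum.distrib)
lemma Y_sum: "ringel h0 (sum f A) = (\<Sum>j\<in>A. ringel h0 (f j))"
  unfolding Y_exp sum_fun_apply by (simp add: sum_subtractf sum.distrib sum_negf sum_distrib_left)

lemma hsum_fix: "Phi (hsum d) = hsum d"
proof -
  let ?k = "rk d"
  let ?g = "\<lambda>j. (Phi ^^ j) d"
  have k1: "?k \<ge> 1" and kk: "?g ?k = d" using rk_props by auto
  have "Phi (hsum d) = (\<Sum>j = 1..?k. ?g (Suc j))" unfolding hsum_def Phi_sum by simp
  also have "\<dots> = (\<Sum>j = Suc 1..Suc ?k. ?g j)" by (rule sum.shift_bounds_cl_Suc_ivl[symmetric])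
  also have "\<dots> = (\<Sum>j = 1..Suc ?k. ?g j) - ?g 1"
    using k1 by (simp add: sum.atLeast_Suc_atMost)
  also have "\<dots> = (\<Sum>j = 1..?k. ?g j) + ?g (Suc ?k) - ?g 1"
    using k1 by (simp add: sum.cl_ivl_Suc)
  also have "?g (Suc ?k) = ?g 1" using kk by simp
  finally show ?thesis unfolding hsum_def by simp
qed

lemma hsum_rad: "hsum d = shift 0 (hsum d v1_1) (hsum d v2_2)"
  by (rule fix_rad[OF hsum_fix])

lemma X_zero: "ringel 0 hinf = 0" unfolding X_exp by simp
lemma Y_zero: "ringel h0 0 = 0" unfolding Y_exp by simp

lemma hsum_X: "6 * hsum d v1_1 = int (rk d) * ringel d hinf"
proof -
  have "ringel (hsum d) hinf = 6 * hsum d v1_1"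
    by (subst hsum_rad) (simp add: X_shift X_zero)
  moreover have "ringel (hsum d) hinf = int (rk d) * ringel d hinf"
    unfolding hsum_def X_sum X_Phi_pow by simp
  ultimately show ?thesis by simp
qed

lemma hsum_Y: "6 * hsum d v2_2 = int (rk d) * ringel h0 d"
proof -
  have "ringel h0 (hsum d) = 6 * hsum d v2_2"
    by (subst hsum_rad) (simp add: Y_shift Y_zero)
  moreover have "ringel h0 (hsum d) = int (rk d) * ringel h0 d"
    unfolding hsum_def Y_sum Y_Phi_pow by simp
  ultimately show ?thesis by simp
qed

lemma Gcd_two: fixes A :: "int set"
  assumes "a \<in> A" "b \<in> A" "\<And>x. x \<in> A \<Longrightarrow> gcd a b dvd x"
  shows "Gcd A = gcd a b"
proof -
  have "Gcd A dvd a" "Gcd A dvd b" using assms(1,2) by (auto intro: Gcd_dvd)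
  then have 1: "Gcd A dvd gcd a b" by simp
  have 2: "gcd a b dvd Gcd A" using assms(3) by (intro Gcd_greatest) auto
  show ?thesis using 1 2 by (simp add: zdvd_antisym_nonneg)
qed

lemma Gcd_range_shift: "Gcd (range (shift 0 a b)) = gcd a b"
proof (rule Gcd_two)
  show "a \<in> range (shift 0 a b)" by (rule range_eqI[of _ _ v1_1]) (simp add: shift_def h0_def hinf_def)
  show "b \<in> range (shift 0 a b)" by (rule range_eqI[of _ _ v2_2]) (simp add: shift_def h0_def hinf_def)
  fix x assume "x \<in> range (shift 0 a b)"
  then obtain v where "x = a * h0 v + b * hinf v" unfolding shift_def by auto
  then show "gcd a b dvd x" by simp
qed

lemma ql_formula: "6 * ql d = int (rk d) * gcd (ringel d hinf) (ringel h0 d)"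
proof -
  have "ql d = gcd (hsum d v1_1) (hsum d v2_2)"
    unfolding ql_def by (subst hsum_rad) (rule Gcd_range_shift)
  then have "6 * ql d = gcd (6 * hsum d v1_1) (6 * hsum d v2_2)"
    using gcd_mult_distrib_int[of 6] by simp
  also have "\<dots> = gcd (int (rk d) * ringel d hinf) (int (rk d) * ringel h0 d)"
    by (simp add: hsum_X hsum_Y)
  also have "\<dots> = int (rk d) * gcd (ringel d hinf) (ringel h0 d)"
    using gcd_mult_distrib_int[of "int (rk d)"] by simp
  finally show ?thesis .
qed

lemma lst_vec: "length xs = 10 \<Longrightarrow> lst (vec xs) = xs"
  unfolding lst_def vl_def vec_def
  by (simp add: list_eq_iff_nth_eq numeral_eq_Suc nth_Cons' less_Suc_eq)

lemma vec_lst: "vec (lst d) = d"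
  unfolding lst_def vl_def vec_def by (rule ext) (simp split: vtx.split)

lemma lst_inj: "lst d = lst e \<longleftrightarrow> d = e"
  by (metis vec_lst)

lemma phiL_lst: "phiL (lst d) = lst (Phi d)"
  unfolding phiL_def vec_lst Phi_eq ..

lemma rk_char: "k \<ge> 1 \<Longrightarrow> (Phi ^^ k) d = d \<Longrightarrow> (\<And>m. 1 \<le> m \<Longrightarrow> m < k \<Longrightarrow> (Phi ^^ m) d \<noteq> d) \<Longrightarrow> rk d = k"
  unfolding rk_def by (rule Least_equality) (auto simp: not_less[symmetric])

lemma rkL_lst: "rkL (lst d) = rk d"
proof -
  have e: "rkL (lst d) = (if Phi d = d then 1 else if Phi (Phi d) = d then 2 else if Phi (Phi (Phi d)) = d then 3 else
     if Phi (Phi (Phi (Phi d))) = d then 4 else if Phi (Phi (Phi (Phi (Phi d)))) = d then 5 else 6)"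
    unfolding rkL_def Let_def by (simp add: phiL_lst lst_inj)
  have r: "rk d \<in> {1,2,3,4,5,6}" using rk_props(1,3)[of d] by auto
  have P: "(Phi ^^ rk d) d = d" by (rule rk_props)
  have m1: "Phi d = d \<Longrightarrow> rk d \<le> 1" using rk_min[of 1 d] by simp
  have m2: "Phi (Phi d) = d \<Longrightarrow> rk d \<le> 2" using rk_min[of 2 d] by (simp add: numeral_eq_Suc)
  have m3: "Phi (Phi (Phi d)) = d \<Longrightarrow> rk d \<le> 3" using rk_min[of 3 d] by (simp add: numeral_eq_Suc)
  have m4: "Phi (Phi (Phi (Phi d))) = d \<Longrightarrow> rk d \<le> 4" using rk_min[of 4 d] by (simp add: numeral_eq_Suc)
  have m5: "Phi (Phi (Phi (Phi (Phi d)))) = d \<Longrightarrow> rk d \<le> 5" using rk_min[of 5 d] by (simp add: numeral_eq_Suc)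
  show ?thesis unfolding e using r P m1 m2 m3 m4 m5 by (auto simp: numeral_eq_Suc)
qed

lemma XL_lst: "XL (lst d) = ringel d hinf" unfolding XL_def X_exp lst_def vl_def by simp
lemma YL_lst: "YL (lst d) = ringel h0 d" unfolding YL_def Y_exp lst_def vl_def by simp
lemma qL_lst: "qL (lst d) = qform d" unfolding qL_def qform_def vec_lst ..
lemma keyL_lst: "keyL (lst d) = (rk d, ringel d hinf mod 6, ringel h0 d mod 6)"
  unfolding keyL_def rkL_lst XL_lst YL_lst ..


definition classes :: "(nat \<times> int \<times> int) list" where
  "classes = [(2,0,0), (2,0,3), (2,3,0), (2,3,3), (3,0,0), (3,0,2), (3,0,4), (3,2,0), (3,2,2), (3,2,4), (3,4,0), (3,4,2), (3,4,4), (6,0,0), (6,0,1), (6,0,2), (6,0,3), (6,0,4), (6,0,5), (6,1,0), (6,1,1), (6,1,2), (6,1,3), (6,1,4), (6,1,5), (6,2,0), (6,2,1), (6,2,2), (6,2,3), (6,2,4), (6,2,5), (6,3,0), (6,3,1), (6,3,2), (6,3,3), (6,3,4), (6,3,5), (6,4,0), (6,4,1), (6,4,2), (6,4,3), (6,4,4), (6,4,5), (6,5,0), (6,5,1), (6,5,2), (6,5,3), (6,5,4), (6,5,5)]"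

lemma classes_count: "list_all (\<lambda>(i, s, t). length (filter (\<lambda>k. k = (i, s, t)) KL) = (if s = 0 \<and> t = 0 then 0 else i)) classes"
  by code_simp

lemma count_KL:
  assumes "i \<in> {2, 3, 6}" "0 \<le> s" "s < 6" "0 \<le> t" "t < 6" "int (6 div i) dvd s" "int (6 div i) dvd t"
  shows "length (filter (\<lambda>k. k = (i, s, t)) KL) = (if s = 0 \<and> t = 0 then 0 else i)"
proof -
  have s6: "s = 0 \<or> s = 1 \<or> s = 2 \<or> s = 3 \<or> s = 4 \<or> s = 5" using assms(2,3) by auto
  have t6: "t = 0 \<or> t = 1 \<or> t = 2 \<or> t = 3 \<or> t = 4 \<or> t = 5" using assms(4,5) by auto
  have i3: "i = 2 \<or> i = 3 \<or> i = 6" using assms(1) by auto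
  have "(i, s, t) \<in> set classes" using i3 s6 t6 assms(6,7) unfolding classes_def
    by (elim disjE) simp_all
  then show ?thesis using classes_count by (auto simp: list_all_iff)
qed


definition good :: "rat option \<Rightarrow> int \<Rightarrow> nat \<Rightarrow> int \<Rightarrow> int \<Rightarrow> bool" where
  "good lam l i x y \<longleftrightarrow> (x > 0 \<or> (x = 0 \<and> y > 0)) \<and>
     (if x = 0 then None else Some (of_int y / of_int x)) = lam \<and> int i * gcd x y = 6 * l"

lemma Rset_char: "d \<in> Rset lam l i \<longleftrightarrow> d \<in> roots \<and> rk d = i \<and> good lam l i (ringel d hinf) (ringel h0 d)"
proof -
  have "ql d = l \<longleftrightarrow> 6 * ql d = 6 * l" by simp
  then show ?thesis unfolding Rset_def roots_slope_def pos_roots_def slope_def good_def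
    using ql_formula[of d] by auto
qed

lemma good_unique: assumes "i > 0" "good lam l i x y" "good lam l i x' y'" shows "x = x' \<and> y = y'"
proof -
  have "int i * gcd x y = int i * gcd x' y'" using assms(2,3) unfolding good_def by simp
  then have g: "gcd x y = gcd x' y'" using assms(1) by simp
  show ?thesis
  proof (cases "x = 0")
    case True
    then have "lam = None" using assms(2) unfolding good_def by simp
    then have "x' = 0" using assms(3) unfolding good_def by (auto split: if_splits)
    have "y > 0" "y' > 0" using assms(2,3) True \<open>x' = 0\<close> unfolding good_def by auto
    then show ?thesis using g True \<open>x' = 0\<close> by simp
  next
    case False
    then have lx: "lam = Some (of_int y / of_int x)" "x > 0" using assms(2) unfolding good_def by auto
    then have "x' \<noteq> 0" using assms(3) unfolding good_def by (auto split: if_splits)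
    then have lx': "lam = Some (of_int y' / of_int x')" "x' > 0" using assms(3) unfolding good_def by auto
    have "(of_int y / of_int x :: rat) = of_int y' / of_int x'" using lx lx' by simp
    then have "(of_int y * of_int x' :: rat) = of_int y' * of_int x"
      using lx(2) lx'(2) by (simp add: frac_eq_eq)
    then have yx: "y * x' = y' * x" by (metis of_int_eq_iff of_int_mult)
    have "x' * gcd x y = gcd (x' * x) (x' * y)" using gcd_mult_distrib_int[of x' x y] lx'(2) by simp
    also have "\<dots> = gcd (x * x') (x * y')" using yx by (simp add: algebra_simps)
    also have "\<dots> = x * gcd x' y'" using gcd_mult_distrib_int[of x x' y'] lx(2) by simp
    finally have "x' * gcd x y = x * gcd x y" using g by simp
    moreover have "gcd x y \<noteq> 0" using lx(2) by simp
    ultimately have "x = x'" by (metis mult_cancel_right)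
    then show ?thesis using yx lx(2) by simp
  qed
qed

lemma good_exists: assumes "i \<in> {1, 2, 3, 6}" "l > 0"
  shows "\<exists>x y. good lam l i x y \<and> int (6 div i) dvd x \<and> int (6 div i) dvd y \<and> ((6 dvd x \<and> 6 dvd y) \<longleftrightarrow> int i dvd l)"
proof -
  define k where "k = int (6 div i)"
  define m where "m = l * k"
  have i6: "int i * k = 6" using assms(1) by (auto simp: k_def)
  have k0: "k > 0" using assms(1) by (auto simp: k_def)
  have m0: "m > 0" using assms k0 by (simp add: m_def)
  have im: "int i * m = 6 * l" using i6 by (simp add: m_def algebra_simps)
  have dv: "6 dvd m \<longleftrightarrow> int i dvd l"
  proof -
    have "6 dvd m \<longleftrightarrow> int i * k dvd l * k" using i6 by (simp add: m_def)
    also have "\<dots> \<longleftrightarrow> int i dvd l" using k0 by simp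
    finally show ?thesis .
  qed
  show ?thesis
  proof (cases lam)
    case None
    have "good lam l i 0 m" unfolding good_def using None m0 im by simp
    moreover have "k dvd m" by (simp add: m_def)
    ultimately show ?thesis using dv unfolding k_def[symmetric] by (intro exI[of _ 0] exI[of _ m]) simp
  next
    case (Some r)
    obtain p q where pq: "quotient_of r = (p, q)" by (cases "quotient_of r")
    have q0: "q > 0" by (rule quotient_of_denom_pos[OF pq])
    have cp: "coprime p q" by (rule quotient_of_coprime[OF pq])
    have r: "r = of_int p / of_int q" by (rule quotient_of_div[OF pq])
    have gg: "gcd (m * q) (m * p) = m" using gcd_mult_distrib_int[of m q p] cp m0
      by (simp add: coprime_imp_gcd_eq_1 gcd.commute)
    have sl: "(of_int (m * p) / of_int (m * q) :: rat) = r" using r m0 by simp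
    have "good lam l i (m * q) (m * p)" unfolding good_def using Some q0 m0 gg im sl by simp
    moreover have "k dvd m * q" "k dvd m * p" by (simp_all add: m_def)
    moreover have "(6 dvd m * q \<and> 6 dvd m * p) \<longleftrightarrow> 6 dvd m"
    proof -
      have "(6 dvd m * q \<and> 6 dvd m * p) \<longleftrightarrow> 6 dvd gcd (m * q) (m * p)" by simp
      then show ?thesis using gg by simp
    qed
    ultimately show ?thesis using dv unfolding k_def[symmetric] by (intro exI[of _ "m * q"] exI[of _ "m * p"]) simp
  qed
qed

lemma mod6: "(X + 6 * (a::int)) mod 6 = X mod 6"
proof -
  have "X + 6 * a = X + a * 6" by simp
  then show ?thesis by (simp only: mod_mult_self1)
qed

lemma Rset_XY: assumes "i > 0" "good lam l i X Y"
  shows "Rset lam l i = {d. d \<in> roots \<and> rk d = i \<and> ringel d hinf = X \<and> ringel h0 d = Y}"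
proof (intro set_eqI iffI)
  fix d assume "d \<in> Rset lam l i"
  then have "d \<in> roots" "rk d = i" "good lam l i (ringel d hinf) (ringel h0 d)" unfolding Rset_char by auto
  then show "d \<in> {d. d \<in> roots \<and> rk d = i \<and> ringel d hinf = X \<and> ringel h0 d = Y}"
    using good_unique[OF assms(1) _ assms(2)] by auto
next
  fix d assume "d \<in> {d. d \<in> roots \<and> rk d = i \<and> ringel d hinf = X \<and> ringel h0 d = Y}"
  then show "d \<in> Rset lam l i" unfolding Rset_char using assms(2) by auto
qed

lemma real_of_rk: assumes "d \<in> roots" "rk d \<noteq> 1" shows "qform d = 1"
proof (rule ccontr)
  assume "qform d \<noteq> 1" then have q0: "qform d = 0" using assms(1) by (auto simp: roots_def)
  let ?r = "shift d (- d v1_1) (- d v2_2)"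
  have "qform ?r = 0" using q0 q_shift by simp
  then have "?r = 0" using T_zero red_zero by blast
  then have "d = shift 0 (d v1_1) (d v2_2)" using shift_red[of d] by simp
  then have "Phi d = d" using Phi_shift Phi_zero by metis
  then have "rk d \<le> 1" using rk_min[of 1 d] by simp
  then show False using rk_props(1)[of d] assms(2) by simp
qed

lemma RL_mem: "xs \<in> set RL \<Longrightarrow> length xs = 10 \<and> vec xs v1_1 = 0 \<and> vec xs v2_2 = 0 \<and> qform (vec xs) = 1"
  using RL_props unfolding list_all_iff qL_def qform_def vec_def by auto

lemma Rset_bij: assumes "i \<in> {2, 3, 6}" "good lam l i X Y"
  shows "bij_betw (\<lambda>d. lst (shift d (- d v1_1) (- d v2_2))) (Rset lam l i) {xs \<in> set RL. keyL xs = (i, X mod 6, Y mod 6)}"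
proof -
  have i0: "i > 0" using assms(1) by auto
  note RX = Rset_XY[OF i0 assms(2)]
  let ?f = "\<lambda>d. lst (shift d (- d v1_1) (- d v2_2))"
  have inj: "inj_on ?f (Rset lam l i)"
  proof (rule inj_onI)
    fix d e assume d: "d \<in> Rset lam l i" and e: "e \<in> Rset lam l i" and fe: "?f d = ?f e"
    then have re: "shift d (- d v1_1) (- d v2_2) = shift e (- e v1_1) (- e v2_2)" using lst_inj by blast
    have "ringel d hinf = ringel e hinf" "ringel h0 d = ringel h0 e" using d e RX by auto
    moreover have "ringel d hinf = ringel (shift d (- d v1_1) (- d v2_2)) hinf + 6 * d v1_1"
      "ringel e hinf = ringel (shift e (- e v1_1) (- e v2_2)) hinf + 6 * e v1_1"
      "ringel h0 d = ringel h0 (shift d (- d v1_1) (- d v2_2)) + 6 * d v2_2"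
      "ringel h0 e = ringel h0 (shift e (- e v1_1) (- e v2_2)) + 6 * e v2_2"
      by (simp_all add: X_shift Y_shift)
    ultimately have "d v1_1 = e v1_1" "d v2_2 = e v2_2" using re by simp_all
    then show "d = e" using shift_red[of d] shift_red[of e] re by metis
  qed
  have img: "?f ` Rset lam l i = {xs \<in> set RL. keyL xs = (i, X mod 6, Y mod 6)}"
  proof (intro set_eqI iffI)
    fix xs assume "xs \<in> ?f ` Rset lam l i"
    then obtain d where d: "d \<in> Rset lam l i" and xs: "xs = ?f d" by auto
    have dd: "d \<in> roots" "rk d = i" "ringel d hinf = X" "ringel h0 d = Y" using d RX by auto
    have q1: "qform d = 1" using real_of_rk dd assms(1) by auto
    let ?r = "shift d (- d v1_1) (- d v2_2)"
    have "lst ?r \<in> set RL" using T_enum red_zero q_shift q1 by metis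
    moreover have "keyL (lst ?r) = (i, X mod 6, Y mod 6)"
      unfolding keyL_lst rk_shift X_shift Y_shift mod6 using dd by simp
    ultimately show "xs \<in> {xs \<in> set RL. keyL xs = (i, X mod 6, Y mod 6)}" using xs by simp
  next
    fix xs assume xs: "xs \<in> {xs \<in> set RL. keyL xs = (i, X mod 6, Y mod 6)}"
    let ?r = "vec xs"
    have r: "length xs = 10" "?r v1_1 = 0" "?r v2_2 = 0" "qform ?r = 1" using RL_mem xs by auto
    have lr: "lst ?r = xs" using lst_vec r(1) by simp
    have k: "keyL (lst ?r) = (i, X mod 6, Y mod 6)" using xs lr by simp
    then have rk: "rk ?r = i" and xm: "ringel ?r hinf mod 6 = X mod 6" and ym: "ringel h0 ?r mod 6 = Y mod 6"
      unfolding keyL_lst by auto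
    define a where "a = (X - ringel ?r hinf) div 6"
    define b where "b = (Y - ringel h0 ?r) div 6"
    have "6 dvd X - ringel ?r hinf" using xm[symmetric] by (simp only: mod_eq_dvd_iff)
    then have a6: "6 * a = X - ringel ?r hinf" unfolding a_def by (rule dvd_mult_div_cancel)
    have "6 dvd Y - ringel h0 ?r" using ym[symmetric] by (simp only: mod_eq_dvd_iff)
    then have b6: "6 * b = Y - ringel h0 ?r" unfolding b_def by (rule dvd_mult_div_cancel)
    let ?d = "shift ?r a b"
    have dX: "ringel ?d hinf = X" using a6 by (simp add: X_shift)
    have dY: "ringel h0 ?d = Y" using b6 by (simp add: Y_shift)
    have drk: "rk ?d = i" using rk by (simp add: rk_shift)
    have dq: "qform ?d = 1" using r by (simp add: q_shift)
    have dn: "?d \<noteq> 0" using dq unfolding qform_def ringel_def by auto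
    have "?d \<in> roots" using dq dn unfolding roots_def by simp
    then have dR: "?d \<in> Rset lam l i" using RX dX dY drk by simp
    have "?d v1_1 = a" "?d v2_2 = b" using r unfolding shift_def h0_def hinf_def by simp_all
    then have "shift ?d (- ?d v1_1) (- ?d v2_2) = ?r" by (simp add: shift_shift) (simp add: shift_def)
    then have "?f ?d = xs" using lr by simp
    then show "xs \<in> ?f ` Rset lam l i" using dR by (intro image_eqI[of _ _ ?d]) simp_all
  qed
  show ?thesis using inj img by (simp add: bij_betw_def)
qed

lemma card_C: "card {xs \<in> set RL. keyL xs = c} = length (filter (\<lambda>k. k = c) KL)"
proof -
  have "{xs \<in> set RL. keyL xs = c} = set (filter (\<lambda>xs. keyL xs = c) RL)" by auto
  then have "card {xs \<in> set RL. keyL xs = c} = length (filter (\<lambda>xs. keyL xs = c) RL)"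
    using distinct_card[OF distinct_filter[OF RL_distinct]] by simp
  also have "\<dots> = length (filter (\<lambda>k. k = c) (map keyL RL))" by (simp add: filter_map comp_def)
  also have "\<dots> = length (filter (\<lambda>k. k = c) KL)" using RL_keys by simp
  finally show ?thesis .
qed

lemma Rset_card: assumes "i \<in> {2, 3, 6}" "l > 0"
  shows "finite (Rset lam l i) \<and> card (Rset lam l i) = (if int i dvd l then 0 else i) \<and> (\<forall>d\<in>Rset lam l i. qform d = 1)"
proof -
  obtain X Y where g: "good lam l i X Y" and dx: "int (6 div i) dvd X" and dy: "int (6 div i) dvd Y"
    and z: "(6 dvd X \<and> 6 dvd Y) \<longleftrightarrow> int i dvd l"
    using good_exists[of i l lam] assms by auto
  note B = Rset_bij[OF assms(1) g]
  have k6: "int (6 div i) dvd 6" using assms(1) by auto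
  have fin: "finite (Rset lam l i)" using bij_betw_finite[OF B] by simp
  have "card (Rset lam l i) = length (filter (\<lambda>k. k = (i, X mod 6, Y mod 6)) KL)"
    using bij_betw_same_card[OF B] card_C by simp
  also have "\<dots> = (if X mod 6 = 0 \<and> Y mod 6 = 0 then 0 else i)"
    by (rule count_KL) (use assms(1) dx dy k6 in \<open>auto simp: dvd_mod_iff\<close>)
  also have "\<dots> = (if int i dvd l then 0 else i)" using z by (simp add: dvd_eq_mod_eq_0)
  finally have c: "card (Rset lam l i) = (if int i dvd l then 0 else i)" .
  have "\<forall>d\<in>Rset lam l i. qform d = 1"
  proof
    fix d assume "d \<in> Rset lam l i"
    then have "d \<in> roots" "rk d = i" by (auto simp: Rset_char)
    then show "qform d = 1" using real_of_rk assms(1) by auto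
  qed
  then show ?thesis using fin c by simp
qed


lemma Phi_pow_zero: "(Phi ^^ j) 0 = 0"
  by (induction j) (simp_all add: Phi_zero[unfolded zero_fun_def] zero_fun_def)

lemma orbit_in: assumes "d \<in> Rset lam l i" shows "(Phi ^^ j) d \<in> Rset lam l i"
proof -
  have d: "d \<in> roots" "rk d = i" "good lam l i (ringel d hinf) (ringel h0 d)" using assms Rset_char by auto
  have "(Phi ^^ j) d \<noteq> 0"
  proof
    assume "(Phi ^^ j) d = 0"
    then have "(Phi ^^ j) d = (Phi ^^ j) 0" by (simp add: Phi_pow_zero)
    then have "d = 0" by (rule Phi_pow_inj)
    then show False using d(1) by (simp add: roots_def)
  qed
  then have "(Phi ^^ j) d \<in> roots" using d(1) by (simp add: roots_def q_Phi_pow)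
  then show ?thesis unfolding Rset_char using d by (simp add: rk_Phi_pow X_Phi_pow Y_Phi_pow)
qed

lemma orbit_inj: assumes "rk d = i" shows "inj_on (\<lambda>j. (Phi ^^ j) d) {1..i}"
proof -
  have key: "False" if jk: "j < k" "1 \<le> j" "k \<le> i" "(Phi ^^ j) d = (Phi ^^ k) d" for j k
  proof -
    let ?e = "(Phi ^^ j) d"
    have "(Phi ^^ (k - j)) ?e = (Phi ^^ (k - j + j)) d" by (simp only: funpow_add comp_apply)
    also have "k - j + j = k" using jk by simp
    finally have "(Phi ^^ (k - j)) ?e = ?e" using jk(4) by simp
    then have "rk ?e \<le> k - j" using jk by (intro rk_min) auto
    moreover have "rk ?e = i" using assms rk_Phi_pow by simp
    ultimately show False using jk by simp
  qed
  show ?thesis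
  proof (rule inj_onI)
    fix j k assume "j \<in> {1..i}" "k \<in> {1..i}" "(Phi ^^ j) d = (Phi ^^ k) d"
    then show "j = k" using key[of j k] key[of k j] by (cases j k rule: linorder_cases) auto
  qed
qed

lemma Rset1_rad: assumes "d \<in> Rset lam l 1"
  shows "d = shift 0 (d v1_1) (d v2_2)" "ringel d hinf = 6 * d v1_1" "ringel h0 d = 6 * d v2_2"
proof -
  have "rk d = 1" using assms Rset_char by auto
  then have "Phi d = d" using rk_props(2)[of d] by simp
  then show dd: "d = shift 0 (d v1_1) (d v2_2)" by (rule fix_rad)
  show "ringel d hinf = 6 * d v1_1" by (subst dd) (simp add: X_shift X_zero)
  show "ringel h0 d = 6 * d v2_2" by (subst dd) (simp add: Y_shift Y_zero)
qed

lemma Rset1_unique: assumes "d \<in> Rset lam l 1" "e \<in> Rset lam l 1" shows "d = e"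
proof -
  have "good lam l 1 (ringel d hinf) (ringel h0 d)" "good lam l 1 (ringel e hinf) (ringel h0 e)"
    using assms Rset_char by auto
  then have "ringel d hinf = ringel e hinf" "ringel h0 d = ringel h0 e" using good_unique[of 1] by auto
  then have "d v1_1 = e v1_1" "d v2_2 = e v2_2" using Rset1_rad[OF assms(1)] Rset1_rad[OF assms(2)] by auto
  then show ?thesis using Rset1_rad(1)[OF assms(1)] Rset1_rad(1)[OF assms(2)] by metis
qed

lemma qform_zero: "qform 0 = 0" unfolding qform_def ringel_def by simp

lemma hab_in: assumes "l > 0" and c: "(case lam of None \<Rightarrow> a = 0 \<and> b = l
                 | Some r \<Rightarrow> a > 0 \<and> of_int b / of_int a = r \<and> gcd a b = l)"
  shows "hab a b \<in> Rset lam l 1"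
proof -
  let ?h = "shift 0 a b"
  have ab: "a > 0 \<or> (a = 0 \<and> b > 0)" using c assms(1) by (cases lam) auto
  have "?h \<noteq> 0"
  proof
    assume h: "?h = 0"
    have "?h v1_1 = a" "?h v2_2 = b" by (simp_all add: shift_def h0_def hinf_def)
    then show False using h ab by (auto simp: fun_eq_iff)
  qed
  then have r: "?h \<in> roots" unfolding roots_def by (simp add: q_shift qform_zero)
  have "Phi ?h = ?h" by (simp add: Phi_shift Phi_zero)
  then have rk: "rk ?h = 1" by (intro rk_char) auto
  have X: "ringel ?h hinf = 6 * a" by (simp add: X_shift X_zero)
  have Y: "ringel h0 ?h = 6 * b" by (simp add: Y_shift Y_zero)
  have g: "good lam l 1 (6 * a) (6 * b)"
  proof (cases lam)
    case None
    then have "a = 0" "b = l" using c by auto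
    then show ?thesis unfolding good_def using None assms(1) by simp
  next
    case (Some r)
    then have "a > 0" "of_int b / of_int a = r" "gcd a b = l" using c by auto
    moreover have "gcd (6 * a) (6 * b) = 6 * gcd a b" using gcd_mult_distrib_int[of 6 a b] by simp
    ultimately show ?thesis unfolding good_def using Some by simp
  qed
  show ?thesis unfolding shift_hab[symmetric] Rset_char using r rk X Y g by simp
qed

theorem mainTheorem15:
  fixes lam :: "rat option" and i :: nat and l :: int
  assumes "i \<in> {1, 2, 3, 6}" and "l > 0"
  shows "(\<forall>d \<in> Rset lam l i. Rset lam l i = {(Phi ^^ j) d | j. j \<in> {1..i}})
       \<and> (i > 1 \<and> int i dvd l \<longrightarrow> Rset lam l i = {})
       \<and> (i > 1 \<and> \<not> int i dvd l \<longrightarrow> card (Rset lam l i) = i \<and> (\<forall>d \<in> Rset lam l i. qform d = 1))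
       \<and> (\<forall>a b. (case lam of
                   None \<Rightarrow> a = 0 \<and> b = l
                 | Some r \<Rightarrow> a > 0 \<and> of_int b / of_int a = r \<and> gcd a b = l)
               \<longrightarrow> Rset lam l 1 = {hab a b})"
proof (intro conjI)
  show "\<forall>d \<in> Rset lam l i. Rset lam l i = {(Phi ^^ j) d | j. j \<in> {1..i}}"
  proof
    fix d assume d: "d \<in> Rset lam l i"
    have O: "{(Phi ^^ j) d | j. j \<in> {1..i}} = (\<lambda>j. (Phi ^^ j) d) ` {1..i}" by blast
    show "Rset lam l i = {(Phi ^^ j) d | j. j \<in> {1..i}}"
    proof (cases "i = 1")
      case True
      then have "rk d = 1" using d Rset_char by auto
      then have "Phi d = d" using rk_props(2)[of d] by simp
      then have "{(Phi ^^ j) d | j. j \<in> {1..i}} = {d}" unfolding O using True by simp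
      moreover have "Rset lam l i = {d}" using d Rset1_unique True by blast
      ultimately show ?thesis by simp
    next
      case False
      then have i: "i \<in> {2, 3, 6}" using assms(1) by auto
      note C = Rset_card[OF i assms(2), of lam]
      have "card (Rset lam l i) \<noteq> 0" using C d i by (auto simp: card_eq_0_iff)
      then have ci: "card (Rset lam l i) = i" using C by (auto split: if_splits)
      have sub: "(\<lambda>j. (Phi ^^ j) d) ` {1..i} \<subseteq> Rset lam l i" using orbit_in[OF d] by auto
      have "rk d = i" using d Rset_char by auto
      then have "card ((\<lambda>j. (Phi ^^ j) d) ` {1..i}) = i" using orbit_inj card_image by fastforce
      then have "(\<lambda>j. (Phi ^^ j) d) ` {1..i} = Rset lam l i"
        using card_subset_eq[OF _ sub] C ci by simp
      then show ?thesis unfolding O by simp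
    qed
  qed
next
  show "i > 1 \<and> int i dvd l \<longrightarrow> Rset lam l i = {}"
  proof
    assume h: "i > 1 \<and> int i dvd l"
    then have i: "i \<in> {2, 3, 6}" using assms(1) by auto
    show "Rset lam l i = {}" using Rset_card[OF i assms(2), of lam] h by auto
  qed
next
  show "i > 1 \<and> \<not> int i dvd l \<longrightarrow> card (Rset lam l i) = i \<and> (\<forall>d \<in> Rset lam l i. qform d = 1)"
  proof
    assume h: "i > 1 \<and> \<not> int i dvd l"
    then have i: "i \<in> {2, 3, 6}" using assms(1) by auto
    show "card (Rset lam l i) = i \<and> (\<forall>d \<in> Rset lam l i. qform d = 1)" using Rset_card[OF i assms(2), of lam] h by auto
  qed
next
  show "\<forall>a b. (case lam of
                   None \<Rightarrow> a = 0 \<and> b = l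
                 | Some r \<Rightarrow> a > 0 \<and> of_int b / of_int a = r \<and> gcd a b = l)
               \<longrightarrow> Rset lam l 1 = {hab a b}"
  proof (intro allI impI)
    fix a b assume c: "(case lam of
                   None \<Rightarrow> a = 0 \<and> b = l
                 | Some r \<Rightarrow> a > 0 \<and> of_int b / of_int a = r \<and> gcd a b = l)"
    have h: "hab a b \<in> Rset lam l 1" by (rule hab_in[OF assms(2) c])
    then show "Rset lam l 1 = {hab a b}" using Rset1_unique by blast
  qed
qed

end
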